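(* Let $a,b,c,d>0$ and let $G_B:\mathbb R^2\to\mathbb R^2$ be given by $G_B(0)=0$ and $G_B(u)=\frac{1}{|u|}\big((au_1^2+bu_2^2)u_1,\ (cu_1^2+du_2^2)u_2\big)$ for $u\neq0$. If $$\max\{a+c,b+d\}+2\sqrt{\max\{a,b\}}\sqrt{\max\{c,d\}}\le 2(b+c+2\sqrt{ad})$$ and $$2(b+c-2\sqrt{ad})\le\min\{a+c,b+d\}+2\sqrt{\min\{a,b\}}\sqrt{\min\{c,d\}},$$ then $G_B$ is monotone. If both inequalities are strict, then $G_B$ is $3$-monotone.
   Context: A map $F:\mathbb R^n\to\mathbb R^n$ is monotone if $(F(u)-F(v))\cdot(u-v)\ge0$ for all $u,v$; for $\alpha>0$ it is $\alpha$-monotone if there is $C>0$ with $(F(u)-F(v))\cdot(u-v)\ge C|u-v|^\alpha$ for all $u,v\in\mathbb R^n$. $|\cdot|$ is the Euclidean norm. *)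

theory Defs
  imports "HOL-Analysis.Analysis"
begin

definition monotone_map :: "('a::real_inner \<Rightarrow> 'a) \<Rightarrow> bool" where
  "monotone_map F \<longleftrightarrow> (\<forall>u v. (F u - F v) \<bullet> (u - v) \<ge> 0)"

definition alpha_monotone :: "real \<Rightarrow> ('a::real_inner \<Rightarrow> 'a) \<Rightarrow> bool" where
  "alpha_monotone \<alpha> F \<longleftrightarrow>
     (\<exists>C>0. \<forall>u v. (F u - F v) \<bullet> (u - v) \<ge> C * norm (u - v) powr \<alpha>)"

definition G_B :: "real \<Rightarrow> real \<Rightarrow> real \<Rightarrow> real \<Rightarrow> real^2 \<Rightarrow> real^2" where
  "G_B a b c d u = (if u = 0 then 0 else
     (1 / norm u) *\<^sub>R vector [(a * (u$1)^2 + b * (u$2)^2) * u$1,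
                               (c * (u$1)^2 + d * (u$2)^2) * u$2])"

end

theory Submission
  imports Defs
begin


lemma QF:
  fixes P1 P2 T m w1 w2 K E s :: real
  assumes "P1 \<ge> 0" "P2 \<ge> 0" "4*P1*P2 \<ge> m^2*K^2" "\<bar>T\<bar> \<le> K - E" "0 \<le> E" "0 \<le> s" "s*K \<le> E" "K > 0"
  shows "P1*w1^2 + T*m*w1*w2 + P2*w2^2 \<ge> s*(P1*w1^2 + P2*w2^2)"
proof -
  define A where "A = P1*w1^2 + P2*w2^2"
  define B where "B = \<bar>m*w1*w2\<bar>"
  have A0: "A \<ge> 0" unfolding A_def using assms by simp
  have B0: "B \<ge> 0" unfolding B_def by simp
  have "A^2 \<ge> 4*P1*P2*w1^2*w2^2"
  proof -
    have "A^2 - 4*P1*P2*w1^2*w2^2 = (P1*w1^2 - P2*w2^2)^2" unfolding A_def by algebra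
    thus ?thesis by (metis diff_ge_0_iff_ge zero_le_power2)
  qed
  moreover have "4*P1*P2*w1^2*w2^2 \<ge> (K*B)^2"
  proof -
    have "(K*B)^2 = m^2*K^2*(w1^2*w2^2)" unfolding B_def by (simp add: power_mult_distrib power2_abs)
    also have "\<dots> \<le> 4*P1*P2*(w1^2*w2^2)" using assms(3) by (intro mult_right_mono) auto
    finally show ?thesis by (simp add: mult.assoc)
  qed
  ultimately have "(K*B)^2 \<le> A^2" by linarith
  hence KB: "K*B \<le> A" using A0 by (rule power2_le_imp_le)
  have s1: "s \<le> 1"
  proof -
    have "s*K \<le> K" using assms by linarith
    thus ?thesis using assms(8) by (simp add: mult_le_cancel_right1)
  qed
  have TB: "\<bar>T*m*w1*w2\<bar> = \<bar>T\<bar>*B" unfolding B_def by (simp add: abs_mult)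
  have "\<bar>T\<bar>*B \<le> (K - E)*B" using assms(4) B0 by (rule mult_right_mono)
  also have "\<dots> \<le> (1-s)*K*B" using assms B0 by (intro mult_right_mono) (auto simp: algebra_simps)
  also have "\<dots> \<le> (1-s)*A" using KB s1 by (simp add: mult.assoc mult_left_mono)
  finally have "\<bar>T*m*w1*w2\<bar> \<le> (1-s)*A" using TB by simp
  thus ?thesis unfolding A_def by (auto simp: algebra_simps)
qed



lemma minmax_comb:
  fixes p q X Y :: real assumes "X \<ge> 0" "Y \<ge> 0"
  shows "min p q*(X+Y) \<le> p*X+q*Y" "p*X+q*Y \<le> max p q*(X+Y)"
proof -
  have "min p q * X \<le> p*X" "min p q * Y \<le> q*Y" "p*X \<le> max p q * X" "q*Y \<le> max p q * Y"
    using assms by (auto intro: mult_right_mono)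
  thus "min p q*(X+Y) \<le> p*X+q*Y" "p*X+q*Y \<le> max p q*(X+Y)" by (simp_all add: distrib_left)
qed

lemma pointwise:
  fixes a b c d e z1 z2 w1 w2 :: real
  assumes pos: "a > 0" "b > 0" "c > 0" "d > 0" and e0: "e \<ge> 0"
  and h1: "max (a + c) (b + d) + 2 * sqrt (max a b) * sqrt (max c d) \<le> 2 * (b + c + 2 * sqrt (a * d)) - e"
  and h2: "2 * (b + c - 2 * sqrt (a * d)) + e \<le> min (a + c) (b + d) + 2 * sqrt (min a b) * sqrt (min c d)"
  and R0: "z1^2 + z2^2 > 0"
  shows "((a*z1^2+b*z2^2)*z2^2 + 2*a*(z1^2+z2^2)*z1^2)*w1^2
         + (2*(z1^2+z2^2)*(b+c) - (a*z1^2+b*z2^2) - (c*z1^2+d*z2^2))*(z1*z2)*w1*w2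
         + ((c*z1^2+d*z2^2)*z1^2 + 2*d*(z1^2+z2^2)*z2^2)*w2^2
       \<ge> (e / (2 * sqrt (max a b) * sqrt (max c d) + 4* sqrt(a*d))) * min (min a b) (min c d) * (z1^2+z2^2)^2 * (w1^2+w2^2)"
proof -
  define X where "X = z1^2"
  define Y where "Y = z2^2"
  define R where "R = z1^2+z2^2"
  define \<alpha> where "\<alpha> = a*z1^2+b*z2^2"
  define \<gamma> where "\<gamma> = c*z1^2+d*z2^2"
  define \<mu> where "\<mu> = min (min a b) (min c d)"
  define Km where "Km = 2 * sqrt (max a b) * sqrt (max c d) + 4* sqrt(a*d)"
  have X0: "X \<ge> 0" and Y0: "Y \<ge> 0" unfolding X_def Y_def by auto
  have RXY: "R = X + Y" unfolding R_def X_def Y_def by simp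
  have Rp: "R > 0" using R0 unfolding R_def .
  have al: "\<alpha> = a*X + b*Y" and ga: "\<gamma> = c*X+d*Y" unfolding \<alpha>_def \<gamma>_def X_def Y_def by auto
  have alo: "min a b * R \<le> \<alpha>" and ahi: "\<alpha> \<le> max a b * R"
    unfolding al RXY using minmax_comb[OF X0 Y0] by auto
  have glo: "min c d * R \<le> \<gamma>" and ghi: "\<gamma> \<le> max c d * R"
    unfolding ga RXY using minmax_comb[OF X0 Y0] by auto
  have acs: "\<alpha> + \<gamma> = (a+c)*X + (b+d)*Y" unfolding al ga by (simp add: algebra_simps)
  have aclo: "min (a+c) (b+d) * R \<le> \<alpha> + \<gamma>" and achi: "\<alpha> + \<gamma> \<le> max (a+c) (b+d) * R"
    unfolding acs RXY using minmax_comb[OF X0 Y0] by auto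
  have mab: "min a b > 0" "min c d > 0" using pos by auto
  have a0: "\<alpha> \<ge> 0" "\<gamma> \<ge> 0" using alo glo mab Rp by (meson less_le mult_nonneg_nonneg order_trans)+
  define sa where "sa = sqrt (\<alpha>*\<gamma>)"
  have sa0: "sa \<ge> 0" and sa2: "sa^2 = \<alpha>*\<gamma>" unfolding sa_def using a0 by auto
  have sahi: "sa \<le> sqrt (max a b) * sqrt (max c d) * R"
  proof -
    have "\<alpha>*\<gamma> \<le> (max a b * R) * (max c d * R)" using ahi ghi a0 by (intro mult_mono) auto
    hence "sa \<le> sqrt ((max a b * max c d) * R^2)" unfolding sa_def
      by (intro real_sqrt_le_mono) (simp add: power2_eq_square algebra_simps)
    also have "\<dots> = sqrt (max a b) * sqrt (max c d) * R" using Rp by (simp add: real_sqrt_mult)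
    finally show ?thesis .
  qed
  have salo: "sqrt (min a b) * sqrt (min c d) * R \<le> sa"
  proof -
    have "(min a b * R) * (min c d * R) \<le> \<alpha>*\<gamma>" using alo glo mab Rp a0 by (intro mult_mono) auto
    hence "sqrt ((min a b * min c d) * R^2) \<le> sa" unfolding sa_def
      by (intro real_sqrt_le_mono) (simp add: power2_eq_square algebra_simps)
    moreover have "sqrt ((min a b * min c d) * R^2) = sqrt (min a b) * sqrt (min c d) * R" using Rp by (simp add: real_sqrt_mult)
    ultimately show ?thesis by simp
  qed
  define sad where "sad = sqrt (a*d)"
  have sad0: "sad > 0" and sad2: "sad^2 = a*d" unfolding sad_def using pos by auto
  define T where "T = 2*R*(b+c) - \<alpha> - \<gamma>"
  define K where "K = 2* sa + 4*R* sad"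
  have Shi: "\<alpha> + \<gamma> + 2* sa \<le> (2 * (b + c + 2 * sad) - e) * R"
  proof -
    have "\<alpha> + \<gamma> + 2* sa \<le> (max (a + c) (b + d) + 2 * sqrt (max a b) * sqrt (max c d)) * R"
      using achi sahi by (simp add: algebra_simps)
    also have "\<dots> \<le> (2 * (b + c + 2 * sad) - e) * R" using h1 Rp unfolding sad_def by (intro mult_right_mono) auto
    finally show ?thesis .
  qed
  have Slo: "(2 * (b + c - 2 * sad) + e) * R \<le> \<alpha> + \<gamma> + 2* sa"
  proof -
    have "(2 * (b + c - 2 * sad) + e) * R \<le> (min (a + c) (b + d) + 2 * sqrt (min a b) * sqrt (min c d)) * R"
      using h2 Rp unfolding sad_def by (intro mult_right_mono) auto
    also have "\<dots> \<le> \<alpha> + \<gamma> + 2* sa" using aclo salo by (simp add: algebra_simps)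
    finally show ?thesis .
  qed
  have Tb: "\<bar>T\<bar> \<le> K - e*R" unfolding T_def K_def using Shi Slo sa0 by (auto simp: algebra_simps abs_le_iff)
  define P1 where "P1 = \<alpha>*Y + 2*a*R*X"
  define P2 where "P2 = \<gamma>*X + 2*d*R*Y"
  have amgm: "d*\<alpha>*Y^2 + a*\<gamma>*X^2 \<ge> 2* sad* sa*X*Y"
  proof -
    define p where "p = sqrt (d*\<alpha>)"
    define q where "q = sqrt (a*\<gamma>)"
    have p2: "p^2 = d*\<alpha>" and q2: "q^2 = a*\<gamma>" unfolding p_def q_def using pos a0 by auto
    have pq: "p*q = sad* sa" unfolding p_def q_def sad_def sa_def
      by (simp add: real_sqrt_mult[symmetric] algebra_simps)
    have "0 \<le> (p*Y - q*X)^2" by simp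
    also have "\<dots> = p^2*Y^2 + q^2*X^2 - 2*(p*q)*X*Y" by (simp add: power2_eq_square algebra_simps)
    finally show ?thesis unfolding p2 q2 pq by simp
  qed
  have PP: "4*P1*P2 \<ge> (z1*z2)^2*K^2"
  proof -
    have "4*P1*P2 = 4*(\<alpha>*\<gamma>*X*Y + 2*R*(d*\<alpha>*Y^2 + a*\<gamma>*X^2) + 4*a*d*R^2*X*Y)"
      unfolding P1_def P2_def by (simp add: power2_eq_square algebra_simps)
    also have "\<dots> \<ge> 4*(sa^2*X*Y + 2*R*(2* sad* sa*X*Y) + 4* sad^2*R^2*X*Y)"
      unfolding sa2 sad2 using amgm Rp by (auto intro!: mult_left_mono)
    finally have "4*P1*P2 \<ge> 4*(sa^2*X*Y + 2*R*(2* sad* sa*X*Y) + 4* sad^2*R^2*X*Y)" .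
    moreover have "(z1*z2)^2*K^2 = 4*(sa^2*X*Y + 2*R*(2* sad* sa*X*Y) + 4* sad^2*R^2*X*Y)"
      unfolding K_def X_def Y_def by (simp add: power2_eq_square algebra_simps)
    ultimately show ?thesis by simp
  qed
  have Kp: "K > 0" unfolding K_def using sa0 sad0 Rp by (simp add: add_nonneg_pos)
  have Km0: "Km > 0" unfolding Km_def using pos by (intro add_nonneg_pos) auto
  have KKm: "K \<le> Km*R" unfolding K_def Km_def sad_def using sahi by (simp add: algebra_simps)
  define s where "s = e / Km"
  have s0: "s \<ge> 0" unfolding s_def using e0 Km0 by simp
  have sK: "s*K \<le> e*R"
  proof -
    have "s*K \<le> s*(Km*R)" using KKm s0 by (rule mult_left_mono)
    also have "\<dots> = e*R" unfolding s_def using Km0 by simp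
    finally show ?thesis .
  qed
  have P10: "P1 \<ge> \<mu>*R^2"
  proof -
    have "\<mu>*R \<le> min a b * R" unfolding \<mu>_def using Rp by (intro mult_right_mono) auto
    hence "\<mu>*R*Y \<le> \<alpha>*Y" using alo Y0 by (intro mult_right_mono) auto
    moreover have "\<mu>*R*X \<le> 2*a*R*X" using X0 Rp pos unfolding \<mu>_def by (intro mult_right_mono) auto
    ultimately have "\<mu>*R*(X+Y) \<le> P1" unfolding P1_def by (simp add: algebra_simps)
    thus ?thesis unfolding RXY[symmetric] by (simp add: power2_eq_square mult.assoc)
  qed
  have P20: "P2 \<ge> \<mu>*R^2"
  proof -
    have "\<mu>*R \<le> min c d * R" unfolding \<mu>_def using Rp by (intro mult_right_mono) auto
    hence "\<mu>*R*X \<le> \<gamma>*X" using glo X0 by (intro mult_right_mono) auto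
    moreover have "\<mu>*R*Y \<le> 2*d*R*Y" using Y0 Rp pos unfolding \<mu>_def by (intro mult_right_mono) auto
    ultimately have "\<mu>*R*(X+Y) \<le> P2" unfolding P2_def by (simp add: algebra_simps)
    thus ?thesis unfolding RXY[symmetric] by (simp add: power2_eq_square mult.assoc)
  qed
  have mu0: "\<mu> > 0" unfolding \<mu>_def using pos by simp
  have main: "P1*w1^2 + T*(z1*z2)*w1*w2 + P2*w2^2 \<ge> s*(P1*w1^2 + P2*w2^2)"
  proof (rule QF[where K=K and E="e*R"])
    show "0 \<le> P1" using P10 mu0 Rp by (meson order_trans mult_nonneg_nonneg less_imp_le zero_le_power2)
    show "0 \<le> P2" using P20 mu0 Rp by (meson order_trans mult_nonneg_nonneg less_imp_le zero_le_power2)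
  qed (use PP Tb e0 Rp s0 sK Kp in auto)
  have "\<mu>*R^2*w1^2 \<le> P1*w1^2" "\<mu>*R^2*w2^2 \<le> P2*w2^2"
    using P10 P20 by (auto intro: mult_right_mono)
  hence "\<mu>*R^2*(w1^2+w2^2) \<le> P1*w1^2 + P2*w2^2" by (simp add: distrib_left)
  hence "s*(\<mu>*R^2*(w1^2+w2^2)) \<le> s*(P1*w1^2 + P2*w2^2)"
    using s0 by (intro mult_left_mono)
  with main have "s*(\<mu>*R^2*(w1^2+w2^2)) \<le> P1*w1^2 + T*(z1*z2)*w1*w2 + P2*w2^2" by linarith
  moreover have "P1*w1^2 + T*(z1*z2)*w1*w2 + P2*w2^2 = ((a*z1^2+b*z2^2)*z2^2 + 2*a*(z1^2+z2^2)*z1^2)*w1^2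
         + (2*(z1^2+z2^2)*(b+c) - (a*z1^2+b*z2^2) - (c*z1^2+d*z2^2))*(z1*z2)*w1*w2
         + ((c*z1^2+d*z2^2)*z1^2 + 2*d*(z1^2+z2^2)*z2^2)*w2^2"
    unfolding P1_def P2_def T_def R_def X_def Y_def \<alpha>_def \<gamma>_def by simp
  moreover have "s*(\<mu>*R^2*(w1^2+w2^2)) = (e / Km) * \<mu> * (z1^2+z2^2)^2 * (w1^2+w2^2)"
    unfolding s_def R_def by simp
  ultimately show ?thesis unfolding Km_def \<mu>_def by simp
qed



lemma hh_deriv: "((\<lambda>x::real. x*\<bar>x\<bar>) has_real_derivative 2*\<bar>x\<bar>) (at x)"
proof (cases "x = 0")
  case True
  have l: "((\<lambda>h::real. \<bar>h\<bar>) \<longlongrightarrow> 0) (at 0)"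
    using tendsto_rabs_zero[OF tendsto_ident_at[of "0::real" UNIV]] by simp
  have ev: "eventually (\<lambda>h. \<bar>h\<bar> = ((0+h)*\<bar>0+h\<bar> - 0*\<bar>0\<bar>) / h) (at (0::real))"
    unfolding eventually_at_filter by (rule always_eventually) simp
  have "((\<lambda>h::real. ((0+h)*\<bar>0+h\<bar> - 0*\<bar>0\<bar>) / h) \<longlongrightarrow> 0) (at 0)"
    by (rule Lim_transform_eventually[OF l ev])
  thus ?thesis using True by (simp add: DERIV_def)
next
  case False
  show ?thesis
  proof (cases "x > 0")
    case True
    have d: "((\<lambda>x::real. x^2) has_real_derivative 2*\<bar>x\<bar>) (at x)" using True by (auto intro!: derivative_eq_intros)
    show ?thesis
      by (rule has_field_derivative_transform_within_open[OF d, of "{0<..}"]) (use True in \<open>auto simp: power2_eq_square\<close>)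
  next
    case False
    with \<open>x \<noteq> 0\<close> have xn: "x < 0" by simp
    have d: "((\<lambda>x::real. -(x^2)) has_real_derivative 2*\<bar>x\<bar>) (at x)" using xn by (auto intro!: derivative_eq_intros)
    show ?thesis
      by (rule has_field_derivative_transform_within_open[OF d, of "{..<0}"]) (use xn in \<open>auto simp: power2_eq_square\<close>)
  qed
qed


lemma hh_ineq:
  fixes s k :: real assumes "k \<ge> 0"
  shows "(s+k)*\<bar>s+k\<bar> - s*\<bar>s\<bar> \<ge> k^2/2"
proof (cases "s \<ge> 0")
  case True
  hence "(s+k)*\<bar>s+k\<bar> - s*\<bar>s\<bar> = 2* s*k + k^2" using assms by (simp add: power2_eq_square algebra_simps)
  moreover have "s*k \<ge> 0" using True assms by simp
  ultimately show ?thesis by simp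
next
  case False
  show ?thesis
  proof (cases "s + k \<ge> 0")
    case True
    with False have "(s+k)*\<bar>s+k\<bar> - s*\<bar>s\<bar> = (s+k)^2 + s^2" by (simp add: power2_eq_square)
    moreover have "(s+k)^2 + s^2 - k^2/2 = (2* s+k)^2/2" by (simp add: power2_eq_square algebra_simps)
    moreover have "(2* s+k)^2/2 \<ge> 0" by simp
    ultimately show ?thesis by linarith
  next
    case F2: False
    with False have "(s+k)*\<bar>s+k\<bar> - s*\<bar>s\<bar> = s^2 - (s+k)^2" by (simp add: power2_eq_square algebra_simps)
    also have "\<dots> = -2* s*k - k^2" by (simp add: power2_eq_square algebra_simps)
    finally have e: "(s+k)*\<bar>s+k\<bar> - s*\<bar>s\<bar> = -2* s*k - k^2" .
    have "(-s)*k \<ge> k*k" using F2 assms by (intro mult_right_mono) auto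
    moreover have "k*k \<ge> 0" by simp
    ultimately show ?thesis unfolding e power2_eq_square by linarith
  qed
qed


definition Phi :: "real \<Rightarrow> real \<Rightarrow> real \<Rightarrow> real \<Rightarrow> real \<Rightarrow> real \<Rightarrow> real \<Rightarrow> real \<Rightarrow> real" where
  "Phi a b c d z1 z2 w1 w2 = ((a*z1^2+b*z2^2)*z1*w1 + (c*z1^2+d*z2^2)*z2*w2) / sqrt (z1^2+z2^2)"

definition Qf :: "real \<Rightarrow> real \<Rightarrow> real \<Rightarrow> real \<Rightarrow> real \<Rightarrow> real \<Rightarrow> real \<Rightarrow> real \<Rightarrow> real" where
  "Qf a b c d z1 z2 w1 w2 = ((a*z1^2+b*z2^2)*z2^2 + 2*a*(z1^2+z2^2)*z1^2)*w1^2
         + (2*(z1^2+z2^2)*(b+c) - (a*z1^2+b*z2^2) - (c*z1^2+d*z2^2))*(z1*z2)*w1*w2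
         + ((c*z1^2+d*z2^2)*z1^2 + 2*d*(z1^2+z2^2)*z2^2)*w2^2"

lemma Phi_deriv:
  fixes a b c d v1 v2 w1 w2 t :: real
  assumes R0: "(v1+t*w1)^2 + (v2+t*w2)^2 > 0"
  shows "((\<lambda>t. Phi a b c d (v1+t*w1) (v2+t*w2) w1 w2) has_real_derivative
           Qf a b c d (v1+t*w1) (v2+t*w2) w1 w2 / (sqrt ((v1+t*w1)^2 + (v2+t*w2)^2))^3) (at t)"
proof -
  define z1 where "z1 = v1+t*w1"
  define z2 where "z2 = v2+t*w2"
  define R where "R = z1^2+z2^2"
  define N where "N = sqrt R"
  have Rp: "R > 0" using R0 unfolding R_def z1_def z2_def .
  have Np: "N > 0" unfolding N_def using Rp by simp
  have N2: "N^2 = R" unfolding N_def using Rp by simp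
  define Num' where "Num' = (3*a*z1^2 + b*z2^2)*w1^2 + 2*(b+c)*z1*z2*w1*w2 + (c*z1^2 + 3*d*z2^2)*w2^2"
  have dNum: "((\<lambda>t. (a*(v1+t*w1)^2+b*(v2+t*w2)^2)*(v1+t*w1)*w1 + (c*(v1+t*w1)^2+d*(v2+t*w2)^2)*(v2+t*w2)*w2)
     has_real_derivative Num') (at t)"
    apply (rule derivative_eq_intros refl | simp)+
    unfolding Num'_def z1_def z2_def by (simp add: power2_eq_square algebra_simps)
  have dR: "((\<lambda>t. (v1+t*w1)^2 + (v2+t*w2)^2) has_real_derivative 2*(z1*w1+z2*w2)) (at t)"
    apply (rule derivative_eq_intros refl | simp)+
    unfolding z1_def z2_def by (simp add: power2_eq_square algebra_simps)
  have dN: "((\<lambda>t. sqrt ((v1+t*w1)^2 + (v2+t*w2)^2)) has_real_derivative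
      (inverse (sqrt R) / 2) * (2*(z1*w1+z2*w2))) (at t)"
  proof -
    have "DERIV sqrt ((v1+t*w1)^2 + (v2+t*w2)^2) :> inverse (sqrt R) / 2"
      using DERIV_real_sqrt[OF R0] unfolding R_def z1_def z2_def by simp
    from DERIV_chain2[OF this dR] show ?thesis by simp
  qed
  have sq: "sqrt ((v1+t*w1)^2 + (v2+t*w2)^2) = N" unfolding N_def R_def z1_def z2_def ..
  have nz: "sqrt ((v1+t*w1)^2 + (v2+t*w2)^2) \<noteq> 0" using Np sq by simp
  show ?thesis unfolding Phi_def
  proof (rule DERIV_cong[OF DERIV_quotient[OF dNum dN nz]])
    define Nm where "Nm = (a*z1^2+b*z2^2)*z1*w1 + (c*z1^2+d*z2^2)*z2*w2"
    define zw where "zw = z1*w1+z2*w2"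
    have Qe: "Qf a b c d z1 z2 w1 w2 = Num'*R - Nm*zw"
      unfolding Qf_def Num'_def R_def Nm_def zw_def by (simp add: power2_eq_square algebra_simps)
    have iv: "inverse (sqrt R) = 1/N" unfolding N_def by (simp add: divide_inverse)
    have "(Num' * N - ((1/N) / 2 * (2*zw)) * Nm) / (N ^ Suc (Suc 0)) = (Num'*N^2 - Nm*zw) / N^3"
      using Np by (simp add: field_simps power2_eq_square power3_eq_cube)
    hence "(Num' * N - ((inverse (sqrt R) / 2) * (2*(z1*w1+z2*w2))) *
         ((a*z1^2+b*z2^2)*z1*w1 + (c*z1^2+d*z2^2)*z2*w2)) / (N ^ Suc (Suc 0))
       = Qf a b c d z1 z2 w1 w2 / N^3" unfolding Qe iv N2 Nm_def[symmetric] zw_def[symmetric] .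
    thus "(Num' * sqrt ((v1+t*w1)^2 + (v2+t*w2)^2) - inverse (sqrt R) / 2 * (2 * (z1 * w1 + z2 * w2)) *
          ((a * (v1 + t * w1)\<^sup>2 + b * (v2 + t * w2)\<^sup>2) * (v1 + t * w1) * w1 +
           (c * (v1 + t * w1)\<^sup>2 + d * (v2 + t * w2)\<^sup>2) * (v2 + t * w2) * w2)) /
         (sqrt ((v1+t*w1)^2 + (v2+t*w2)^2) ^ Suc (Suc 0)) =
         Qf a b c d (v1 + t * w1) (v2 + t * w2) w1 w2 / sqrt ((v1 + t * w1)\<^sup>2 + (v2 + t * w2)\<^sup>2) ^ 3"
      unfolding sq unfolding z1_def z2_def by simp
  qed
qed



lemma general:
  fixes a b c d lam v1 v2 w1 w2 :: real
  assumes lam0: "lam \<ge> 0"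
  and pw: "\<And>z1 z2. z1^2+z2^2 > 0 \<Longrightarrow> Qf a b c d z1 z2 w1 w2 \<ge> lam*(z1^2+z2^2)^2*(w1^2+w2^2)"
  and nz: "\<And>t. 0 \<le> t \<Longrightarrow> t \<le> 1 \<Longrightarrow> (v1+t*w1)^2 + (v2+t*w2)^2 > 0"
  shows "Phi a b c d (v1+w1) (v2+w2) w1 w2 - Phi a b c d v1 v2 w1 w2 \<ge> lam/4 * (sqrt(w1^2+w2^2))^3"
proof (cases "w1^2+w2^2 = 0")
  case True
  hence "w1 = 0" "w2 = 0" by (auto simp: sum_power2_eq_zero_iff)
  thus ?thesis by (simp add: Phi_def)
next
  case False
  define L2 where "L2 = w1^2+w2^2"
  define L where "L = sqrt L2"
  define \<sigma> where "\<sigma> = v1*w1+v2*w2"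
  have L2p: "L2 > 0" using False unfolding L2_def by (simp add: add_nonneg_nonneg less_le)
  have Lp: "L > 0" and LL: "L^2 = L2" unfolding L_def using L2p by auto
  define \<psi> where "\<psi> = (\<lambda>t. Phi a b c d (v1+t*w1) (v2+t*w2) w1 w2 - lam*L*((\<sigma>+t*L2)*\<bar>\<sigma>+t*L2\<bar>/(2*L2)))"
  define D where "D = (\<lambda>t. Qf a b c d (v1+t*w1) (v2+t*w2) w1 w2 / (sqrt ((v1+t*w1)^2 + (v2+t*w2)^2))^3
                   - lam*L*(2*\<bar>\<sigma>+t*L2\<bar>*L2/(2*L2)))"
  have dpsi: "(\<psi> has_real_derivative D t) (at t)" if t: "t \<in> {0..1}" for t
  proof -
    note d1 = Phi_deriv[of v1 t w1 v2 w2 a b c d, OF nz]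
    have dl: "((\<lambda>t. \<sigma>+t*L2) has_real_derivative L2) (at t)" by (auto intro!: derivative_eq_intros)
    have d2: "((\<lambda>t. (\<sigma>+t*L2)*\<bar>\<sigma>+t*L2\<bar>) has_real_derivative 2*\<bar>\<sigma>+t*L2\<bar>*L2) (at t)"
      using DERIV_chain2[OF hh_deriv dl] by simp
    have d3: "((\<lambda>t. lam*L*((\<sigma>+t*L2)*\<bar>\<sigma>+t*L2\<bar>/(2*L2))) has_real_derivative lam*L*(2*\<bar>\<sigma>+t*L2\<bar>*L2/(2*L2))) (at t)"
      by (intro DERIV_cmult DERIV_cdivide d2)
    show ?thesis unfolding \<psi>_def D_def using DERIV_diff[OF d1 d3] t by simp
  qed
  have Dnn: "D t \<ge> 0" if t: "t \<in> {0..1}" for t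
  proof -
    define z1 where "z1 = v1+t*w1"
    define z2 where "z2 = v2+t*w2"
    define R where "R = z1^2+z2^2"
    define N where "N = sqrt R"
    have Rp: "R > 0" unfolding R_def z1_def z2_def using nz t by auto
    have Np: "N > 0" unfolding N_def using Rp by simp
    have N2: "N^2 = R" unfolding N_def using Rp by simp
    have Q: "Qf a b c d z1 z2 w1 w2 \<ge> lam*R^2*L2" using pw[OF Rp[unfolded R_def]] unfolding R_def L2_def .
    have "Qf a b c d z1 z2 w1 w2 / N^3 \<ge> lam*R^2*L2 / N^3" using Q Np by (simp add: divide_right_mono)
    moreover have "lam*R^2*L2 / N^3 = lam*N*L2" unfolding N2[symmetric] using Np
      by (simp add: field_simps power2_eq_square power3_eq_cube)
    ultimately have A: "Qf a b c d z1 z2 w1 w2 / N^3 \<ge> lam*N*L2" by simp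
    have zw: "\<sigma>+t*L2 = z1*w1+z2*w2" unfolding \<sigma>_def L2_def z1_def z2_def by (simp add: power2_eq_square algebra_simps)
    have CS: "\<bar>z1*w1+z2*w2\<bar> \<le> N*L"
    proof -
      have "(z1*w1+z2*w2)^2 \<le> R*L2"
      proof -
        have "R*L2 - (z1*w1+z2*w2)^2 = (z1*w2-z2*w1)^2" unfolding R_def L2_def by (simp add: power2_eq_square algebra_simps)
        thus ?thesis by (metis diff_ge_0_iff_ge zero_le_power2)
      qed
      hence "sqrt ((z1*w1+z2*w2)^2) \<le> sqrt (R*L2)" by (rule real_sqrt_le_mono)
      thus ?thesis unfolding N_def L_def by (simp add: real_sqrt_mult)
    qed
    have B: "lam*L*(2*\<bar>\<sigma>+t*L2\<bar>*L2/(2*L2)) = lam*L*\<bar>z1*w1+z2*w2\<bar>" using L2p zw by simp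
    have "lam*L*\<bar>z1*w1+z2*w2\<bar> \<le> lam*L*(N*L)" using CS lam0 Lp by (intro mult_left_mono) auto
    also have "\<dots> = lam*N*L2" using LL by (simp add: power2_eq_square algebra_simps)
    finally have "lam*L*(2*\<bar>\<sigma>+t*L2\<bar>*L2/(2*L2)) \<le> lam*N*L2" unfolding B .
    with A show ?thesis unfolding D_def z1_def z2_def N_def R_def by simp
  qed
  have mono: "\<psi> 0 \<le> \<psi> 1" by (rule deriv_nonneg_imp_mono[OF dpsi Dnn]) auto
  have hh: "(\<sigma>+L2)*\<bar>\<sigma>+L2\<bar> - \<sigma>*\<bar>\<sigma>\<bar> \<ge> L2^2/2" using hh_ineq[of L2 \<sigma>] L2p by simp
  have "lam*L*(((\<sigma>+L2)*\<bar>\<sigma>+L2\<bar> - \<sigma>*\<bar>\<sigma>\<bar>)/(2*L2)) \<ge> lam*L*((L2^2/2)/(2*L2))"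
    using hh lam0 Lp L2p by (intro mult_left_mono divide_right_mono) auto
  moreover have "lam*L*((L2^2/2)/(2*L2)) = lam/4 * L^3" using L2p LL[symmetric]
    by (simp add: field_simps power2_eq_square power3_eq_cube)
  moreover have "Phi a b c d (v1+w1) (v2+w2) w1 w2 - Phi a b c d v1 v2 w1 w2
        = \<psi> 1 - \<psi> 0 + lam*L*(((\<sigma>+L2)*\<bar>\<sigma>+L2\<bar> - \<sigma>*\<bar>\<sigma>\<bar>)/(2*L2))"
    unfolding \<psi>_def using L2p by (simp add: field_simps)
  ultimately have "Phi a b c d (v1+w1) (v2+w2) w1 w2 - Phi a b c d v1 v2 w1 w2 \<ge> lam/4 * L^3"
    using mono by linarith
  thus ?thesis unfolding L_def L2_def .
qed



lemma norm2: "norm (u::real^2) = sqrt (u$1^2+u$2^2)"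
  by (simp add: norm_eq_sqrt_inner inner_vec_def sum_2 power2_eq_square)

lemma inner2: "(x::real^2) \<bullet> y = x$1*y$1 + x$2*y$2"
  by (simp add: inner_vec_def sum_2)

lemma zero2: "((u::real^2) = 0) \<longleftrightarrow> u$1 = 0 \<and> u$2 = 0"
  by (simp add: vec_eq_iff forall_2)

lemma GB_inner: "G_B a b c d u \<bullet> w = (if u$1 = 0 \<and> u$2 = 0 then 0 else Phi a b c d (u$1) (u$2) (w$1) (w$2))"
proof (cases "u = 0")
  case True thus ?thesis by (simp add: G_B_def zero2)
next
  case False
  hence "\<not> (u$1 = 0 \<and> u$2 = 0)" by (simp add: zero2)
  thus ?thesis using False unfolding G_B_def Phi_def
    by (simp add: inner2 norm2 algebra_simps divide_inverse)
qed

lemma Phi_scale: "Phi a b c d (s*w1) (s*w2) w1 w2 = s*\<bar>s\<bar> * Phi a b c d w1 w2 w1 w2"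
proof -
  define Num where "Num = (a*w1^2+b*w2^2)*w1*w1 + (c*w1^2+d*w2^2)*w2*w2"
  define N where "N = sqrt (w1^2+w2^2)"
  have sq: "sqrt ((s*w1)^2+(s*w2)^2) = \<bar>s\<bar> * N"
    unfolding N_def by (simp add: power_mult_distrib real_sqrt_mult distrib_left[symmetric])
  have num: "(a*(s*w1)^2+b*(s*w2)^2)*(s*w1)*w1 + (c*(s*w1)^2+d*(s*w2)^2)*(s*w2)*w2 = (s*abs s*abs s) * Num"
  proof -
    have "abs s*abs s = s * s" by (simp add: abs_mult_self_eq)
    thus ?thesis unfolding Num_def by (simp add: algebra_simps power2_eq_square)
  qed
  have "Phi a b c d (s*w1) (s*w2) w1 w2 = (s*abs s*abs s) * Num / (\<bar>s\<bar> * N)"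
    unfolding Phi_def num sq ..
  also have "\<dots> = s*\<bar>s\<bar> * (Num / N)"
  proof (cases "s = 0 \<or> N = 0")
    case False
    hence "abs s \<noteq> 0" "N \<noteq> 0" by auto
    thus ?thesis by (simp add: divide_simps del: abs_mult_self_eq)
  qed auto
  also have "Num / N = Phi a b c d w1 w2 w1 w2" unfolding Phi_def Num_def N_def ..
  finally show ?thesis .
qed



lemma GB_scale:
  assumes "u$1 = s * w$1" "u$2 = s * w$2"
  shows "G_B a b c d u \<bullet> w = s*\<bar>s\<bar> * Phi a b c d (w$1) (w$2) (w$1) (w$2)"
proof (cases "u$1 = 0 \<and> u$2 = 0")
  case True
  hence "s = 0 \<or> (w$1 = 0 \<and> w$2 = 0)" using assms by auto
  thus ?thesis using True by (auto simp: GB_inner Phi_def)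
next
  case False
  thus ?thesis using assms by (auto simp: GB_inner Phi_scale)
qed

lemma Phi_self_lower:
  fixes a b c d w1 w2 :: real
  assumes "a > 0" "d > 0" "b + c \<ge> 0"
  shows "Phi a b c d w1 w2 w1 w2 \<ge> min a d / 2 * (sqrt (w1^2+w2^2))^3"
proof (cases "w1^2+w2^2 = 0")
  case True thus ?thesis by (simp add: Phi_def)
next
  case False
  define L2 where "L2 = w1^2+w2^2"
  define L where "L = sqrt L2"
  have L2p: "L2 > 0" using False unfolding L2_def by (simp add: add_nonneg_nonneg less_le)
  have Lp: "L > 0" and LL: "L^2 = L2" unfolding L_def using L2p by auto
  define m where "m = min a d"
  have m0: "m > 0" unfolding m_def using assms by simp
  have num: "(a*w1^2+b*w2^2)*w1*w1 + (c*w1^2+d*w2^2)*w2*w2 = a*(w1^2)^2 + (b+c)*(w1^2*w2^2) + d*(w2^2)^2"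
    by (simp add: power2_eq_square algebra_simps)
  have "m*((w1^2)^2 + (w2^2)^2) \<le> a*(w1^2)^2 + d*(w2^2)^2"
    unfolding m_def by (simp add: distrib_left add_mono mult_right_mono)
  moreover have "(b+c)*(w1^2*w2^2) \<ge> 0" using assms by simp
  moreover have "(w1^2)^2 + (w2^2)^2 \<ge> L2^2/2"
  proof -
    have "(w1^2)^2 + (w2^2)^2 - L2^2/2 = (w1^2 - w2^2)^2/2" unfolding L2_def by (simp add: power2_eq_square algebra_simps)
    moreover have "(w1^2 - w2^2)^2/2 \<ge> 0" by simp
    ultimately show ?thesis by linarith
  qed
  ultimately have "a*(w1^2)^2 + (b+c)*(w1^2*w2^2) + d*(w2^2)^2 \<ge> m*(L2^2/2)"
    using m0 by (smt (verit) mult_left_mono)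
  hence "m*(L2^2/2) / L \<le> (a*(w1^2)^2 + (b+c)*(w1^2*w2^2) + d*(w2^2)^2) / L"
    using Lp by (intro divide_right_mono) auto
  moreover have "Phi a b c d w1 w2 w1 w2 = (a*(w1^2)^2 + (b+c)*(w1^2*w2^2) + d*(w2^2)^2) / L"
    unfolding Phi_def num L_def L2_def ..
  ultimately have "Phi a b c d w1 w2 w1 w2 \<ge> m*(L2^2/2) / L" by simp
  moreover have "m*(L2^2/2) / L = m/2 * L^3" using Lp LL[symmetric]
    by (simp add: field_simps power2_eq_square power3_eq_cube)
  ultimately show ?thesis unfolding m_def L_def L2_def by simp
qed

lemma master:
  fixes a b c d lam :: real
  assumes pos: "a > 0" "d > 0" "b + c \<ge> 0" and lam0: "lam \<ge> 0" and lamad: "lam \<le> min a d"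
  and pw: "\<And>z1 z2 w1 w2. z1^2+z2^2 > 0 \<Longrightarrow> Qf a b c d z1 z2 w1 w2 \<ge> lam*(z1^2+z2^2)^2*(w1^2+w2^2)"
  shows "(G_B a b c d u - G_B a b c d v) \<bullet> (u - v) \<ge> lam/4 * norm (u-v)^3"
proof -
  define w where "w = u - v"
  define w1 where "w1 = w$1"
  define w2 where "w2 = w$2"
  define v1 where "v1 = v$1"
  define v2 where "v2 = v$2"
  have u1: "u$1 = v1 + w1" and u2: "u$2 = v2 + w2" unfolding w1_def w2_def v1_def v2_def w_def by auto
  have nw: "norm (u-v) = sqrt (w1^2+w2^2)" unfolding w1_def w2_def w_def by (rule norm2)
  have eq: "(G_B a b c d u - G_B a b c d v) \<bullet> (u - v) = G_B a b c d u \<bullet> w - G_B a b c d v \<bullet> w"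
    unfolding w_def by (rule inner_diff_left)
  show ?thesis
  proof (cases "\<exists>t. 0 \<le> t \<and> t \<le> 1 \<and> v1+t*w1 = 0 \<and> v2+t*w2 = 0")
    case False
    have nz: "(v1+t*w1)^2 + (v2+t*w2)^2 > 0" if "0 \<le> t" "t \<le> 1" for t
      using False that by (auto simp: sum_power2_gt_zero_iff)
    have gu: "G_B a b c d u \<bullet> w = Phi a b c d (v1+w1) (v2+w2) w1 w2"
      using False unfolding GB_inner u1 u2 w1_def[symmetric] w2_def[symmetric]
      by (metis mult_1 order_refl zero_le_one)
    have gv: "G_B a b c d v \<bullet> w = Phi a b c d v1 v2 w1 w2"
      using False unfolding GB_inner v1_def[symmetric] v2_def[symmetric] w1_def[symmetric] w2_def[symmetric]
      by (metis add_0_right mult_zero_left order_refl zero_le_one)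
    show ?thesis unfolding eq gu gv nw by (rule general[OF lam0 pw nz])
  next
    case True
    then obtain t where t: "0 \<le> t" "t \<le> 1" "v1+t*w1 = 0" "v2+t*w2 = 0" by auto
    have gu: "G_B a b c d u \<bullet> w = (1-t)*\<bar>1-t\<bar> * Phi a b c d w1 w2 w1 w2"
      unfolding w1_def w2_def by (rule GB_scale) (use u1 u2 t in \<open>auto simp: w1_def w2_def algebra_simps\<close>)
    have gv: "G_B a b c d v \<bullet> w = (-t)*\<bar>-t\<bar> * Phi a b c d w1 w2 w1 w2"
      unfolding w1_def w2_def by (rule GB_scale) (use t in \<open>auto simp: v1_def v2_def w1_def w2_def algebra_simps\<close>)
    define P where "P = Phi a b c d w1 w2 w1 w2"
    define L where "L = sqrt (w1^2+w2^2)"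
    have L0: "L \<ge> 0" unfolding L_def by simp
    have P: "P \<ge> min a d / 2 * L^3" unfolding P_def L_def by (rule Phi_self_lower[OF pos])
    have c: "(1-t)*\<bar>1-t\<bar> - (-t)*\<bar>-t\<bar> = (1-t)^2 + t^2" using t by (simp add: power2_eq_square)
    have c2: "(1-t)^2 + t^2 \<ge> 1/2"
    proof -
      have "(1-t)^2 + t^2 - 1/2 = 2*(t-1/2)^2" by (simp add: power2_eq_square algebra_simps)
      thus ?thesis by (metis diff_ge_0_iff_ge mult_nonneg_nonneg zero_le_numeral zero_le_power2)
    qed
    have P0: "min a d / 2 * L^3 \<ge> 0" using pos L0 by simp
    have "lam/4 * L^3 \<le> min a d / 4 * L^3" using lamad L0 by (intro mult_right_mono) auto
    also have "\<dots> = 1/2 * (min a d / 2 * L^3)" by simp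
    also have "\<dots> \<le> ((1-t)^2 + t^2) * P" using c2 P P0 by (intro mult_mono) auto
    finally have "lam/4 * L^3 \<le> ((1-t)^2 + t^2) * P" .
    moreover have "G_B a b c d u \<bullet> w - G_B a b c d v \<bullet> w = ((1-t)^2 + t^2) * P"
      unfolding gu gv P_def c[symmetric] by (simp add: algebra_simps)
    ultimately show ?thesis unfolding eq nw L_def[symmetric] by simp
  qed
qed


theorem mainTheorem5:
  fixes a b c d :: real
  assumes "a > 0" "b > 0" "c > 0" "d > 0"
  shows "(max (a + c) (b + d) + 2 * sqrt (max a b) * sqrt (max c d) \<le> 2 * (b + c + 2 * sqrt (a * d))
          \<and> 2 * (b + c - 2 * sqrt (a * d)) \<le> min (a + c) (b + d) + 2 * sqrt (min a b) * sqrt (min c d)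
          \<longrightarrow> monotone_map (G_B a b c d))
       \<and> (max (a + c) (b + d) + 2 * sqrt (max a b) * sqrt (max c d) < 2 * (b + c + 2 * sqrt (a * d))
          \<and> 2 * (b + c - 2 * sqrt (a * d)) < min (a + c) (b + d) + 2 * sqrt (min a b) * sqrt (min c d)
          \<longrightarrow> alpha_monotone 3 (G_B a b c d))"
proof -
  define Km where "Km = 2 * sqrt (max a b) * sqrt (max c d) + 4 * sqrt (a * d)"
  define \<mu> where "\<mu> = min (min a b) (min c d)"
  have Km0: "Km > 0" unfolding Km_def using assms by (intro add_nonneg_pos) auto
  have mu0: "\<mu> > 0" unfolding \<mu>_def using assms by simp
  have bc: "b + c \<ge> 0" using assms by simp
  have RL: "(z1^2+z2^2)^2*(w1^2+w2^2) \<ge> 0" for z1 z2 w1 w2 :: real by simp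
  show ?thesis
  proof (intro conjI impI)
    assume H: "max (a + c) (b + d) + 2 * sqrt (max a b) * sqrt (max c d) \<le> 2 * (b + c + 2 * sqrt (a * d))
          \<and> 2 * (b + c - 2 * sqrt (a * d)) \<le> min (a + c) (b + d) + 2 * sqrt (min a b) * sqrt (min c d)"
    have pw: "Qf a b c d z1 z2 w1 w2 \<ge> 0*(z1^2+z2^2)^2*(w1^2+w2^2)" if "z1^2+z2^2 > 0" for z1 z2 w1 w2
      using pointwise[of a b c d 0 z1 z2 w1 w2] assms H that unfolding Qf_def by simp
    have "(G_B a b c d u - G_B a b c d v) \<bullet> (u - v) \<ge> 0" for u v
      using master[of a d b c 0, OF assms(1) assms(4) bc _ _ pw, of u v] assms by simp
    thus "monotone_map (G_B a b c d)" unfolding monotone_map_def by blast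
  next
    assume H: "max (a + c) (b + d) + 2 * sqrt (max a b) * sqrt (max c d) < 2 * (b + c + 2 * sqrt (a * d))
          \<and> 2 * (b + c - 2 * sqrt (a * d)) < min (a + c) (b + d) + 2 * sqrt (min a b) * sqrt (min c d)"
    define e where "e = min (2 * (b + c + 2 * sqrt (a * d)) - (max (a + c) (b + d) + 2 * sqrt (max a b) * sqrt (max c d)))
       (min (a + c) (b + d) + 2 * sqrt (min a b) * sqrt (min c d) - 2 * (b + c - 2 * sqrt (a * d)))"
    have e0: "e > 0" unfolding e_def using H by simp
    define lam where "lam = min (e / Km * \<mu>) (min a d)"
    have lam0: "lam > 0" unfolding lam_def using e0 Km0 mu0 assms by simp
    have pw: "Qf a b c d z1 z2 w1 w2 \<ge> lam*(z1^2+z2^2)^2*(w1^2+w2^2)" if "z1^2+z2^2 > 0" for z1 z2 w1 w2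
    proof -
      have "Qf a b c d z1 z2 w1 w2 \<ge> (e / Km) * \<mu> * (z1^2+z2^2)^2*(w1^2+w2^2)"
        using pointwise[of a b c d e z1 z2 w1 w2] assms e0 that unfolding Qf_def Km_def \<mu>_def e_def
        by (simp add: min_def)
      moreover have "lam*((z1^2+z2^2)^2*(w1^2+w2^2)) \<le> (e / Km * \<mu>)*((z1^2+z2^2)^2*(w1^2+w2^2))"
        unfolding lam_def by (intro mult_right_mono) auto
      ultimately show ?thesis by (simp add: mult.assoc)
    qed
    have "(G_B a b c d u - G_B a b c d v) \<bullet> (u - v) \<ge> lam/4 * norm (u - v) powr 3" for u v
    proof -
      have "lam \<le> min a d" unfolding lam_def by (rule min.cobounded2)
      from master[of a d b c lam, OF assms(1) assms(4) bc _ this pw, of u v] lam0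
      show ?thesis by (simp add: powr_numeral)
    qed
    moreover have "lam/4 > 0" using lam0 by simp
    ultimately show "alpha_monotone 3 (G_B a b c d)" unfolding alpha_monotone_def by blast
  qed
qed

end
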